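(* Let $d\in\mathbb{N}$, $N=d$, $\mathcal{N}=\{1,\dots,d\}$, and consider the switched system $x(t+1)=A_{\nu(t)}x(t)+b_{\nu(t)}\mu(t)$ with state set $\mathcal{X}=\mathbb{R}^d$ and set of admissible continuous controls $\mathcal{U}=\mathbb{R}$. Suppose each $A_i$, $i\in\mathcal{N}$, is an anti-diagonal matrix with all anti-diagonal entries nonzero, and each $b_i\in\mathbb{R}^d$ has its $(d-i+1)$-th entry nonzero and all other entries zero. Define $\mathcal{X}_0=\{0_d\}$, $\mathcal{X}_j=\{x\in\mathbb{R}^d: x_j\neq0,\ x_i=0 \text{ for all } i\neq j\}$ for $j=1,\dots,d$, and $\mathcal{X}_{d+1}=\mathbb{R}^d\setminus\bigcup_{j=0}^d\mathcal{X}_j$. Then $(\mathcal{X}_j)_{j=0}^{d+1}$ is a state-space abstraction of this switched system.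
   Context: A family $(\mathcal{X}_j)_{j=0}^n$ of subsets of $\mathcal{X}$ is a state-space abstraction of the switched system with subsystems $(A_i,b_i)$, $i\in\mathcal{N}$, and admissible continuous control set $\mathcal{U}$ if: (i) $\mathcal{X}_0=\{0_d\}$; (ii) the $\mathcal{X}_j$ are pairwise disjoint; (iii) $\bigcup_{j=0}^n\mathcal{X}_j=\mathcal{X}$; (iv) for each $j\in\{1,\dots,n\}$ and $i\in\mathcal{N}$ there is $k\in\{0,\dots,n\}$ with $A_ix\in\mathcal{X}_k$ for all $x\in\mathcal{X}_j$; (v) for each $j\in\{1,\dots,n\}$ and $i\in\mathcal{N}$ there is $\ell\in\{0,\dots,n\}$ such that for every $x\in\mathcal{X}_j$, $A_ix+b_i\mu(x)\in\mathcal{X}_\ell$ for some $\mu(x)\in\mathcal{U}\setminus\{0\}$. *)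

theory Defs
  imports Complex_Main
begin

text \<open>Convention: a vector in R^d is represented as a function nat => real that
  is zero outside the index range 1..d; a d x d matrix as nat => nat => real,
  only entries with indices in 1..d being relevant.\<close>

definition Rd :: "nat \<Rightarrow> (nat \<Rightarrow> real) set" where
  "Rd d = {x. \<forall>r. r \<notin> {1..d} \<longrightarrow> x r = 0}"

definition zerov :: "nat \<Rightarrow> real" where
  "zerov = (\<lambda>_. 0)"

definition mulv :: "nat \<Rightarrow> (nat \<Rightarrow> nat \<Rightarrow> real) \<Rightarrow> (nat \<Rightarrow> real) \<Rightarrow> (nat \<Rightarrow> real)" where
  "mulv d M x = (\<lambda>r. if r \<in> {1..d} then (\<Sum>c=1..d. M r c * x c) else 0)"

definition state_space_abstraction ::
  "nat \<Rightarrow> (nat \<Rightarrow> real) set \<Rightarrow> nat set \<Rightarrow> (nat \<Rightarrow> nat \<Rightarrow> nat \<Rightarrow> real)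
   \<Rightarrow> (nat \<Rightarrow> nat \<Rightarrow> real) \<Rightarrow> real set \<Rightarrow> (nat \<Rightarrow> (nat \<Rightarrow> real) set) \<Rightarrow> nat \<Rightarrow> bool" where
  "state_space_abstraction d X NN A b U Xs n \<longleftrightarrow>
     Xs 0 = {zerov} \<and>
     (\<forall>j\<le>n. \<forall>k\<le>n. j \<noteq> k \<longrightarrow> Xs j \<inter> Xs k = {}) \<and>
     (\<Union>j\<le>n. Xs j) = X \<and>
     (\<forall>j\<in>{1..n}. \<forall>i\<in>NN. \<exists>k\<le>n. \<forall>x\<in>Xs j. mulv d (A i) x \<in> Xs k) \<and>
     (\<forall>j\<in>{1..n}. \<forall>i\<in>NN. \<exists>l\<le>n. \<forall>x\<in>Xs j. \<exists>u\<in>U - {0}.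
         (\<lambda>r. mulv d (A i) x r + b i r * u) \<in> Xs l)"

definition antidiag_nonzero :: "nat \<Rightarrow> (nat \<Rightarrow> nat \<Rightarrow> real) \<Rightarrow> bool" where
  "antidiag_nonzero d M \<longleftrightarrow>
     (\<forall>r\<in>{1..d}. \<forall>c\<in>{1..d}. (r + c = d + 1 \<longleftrightarrow> M r c \<noteq> 0))"

definition abstr_family :: "nat \<Rightarrow> nat \<Rightarrow> (nat \<Rightarrow> real) set" where
  "abstr_family d j =
     (if j = 0 then {zerov}
      else if j \<le> d then {x \<in> Rd d. x j \<noteq> 0 \<and> (\<forall>i\<in>{1..d}. i \<noteq> j \<longrightarrow> x i = 0)}
      else Rd d - (\<Union>k\<le>d. (if k = 0 then {zerov}
            else {x \<in> Rd d. x k \<noteq> 0 \<and> (\<forall>i\<in>{1..d}. i \<noteq> k \<longrightarrow> x i = 0)})))"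

end

theory Submission
  imports Defs
begin

lemma mulv_ad:
  assumes "antidiag_nonzero d M" "r \<in> {1..d}"
  shows "mulv d M x r = M r (d + 1 - r) * x (d + 1 - r)"
proof -
  have "(\<Sum>c=1..d. M r c * x c) = (\<Sum>c=1..d. if c = d + 1 - r then M r (d + 1 - r) * x (d + 1 - r) else 0)"
  proof (rule sum.cong)
    fix c assume c: "c \<in> {1..d}"
    show "M r c * x c = (if c = d + 1 - r then M r (d + 1 - r) * x (d + 1 - r) else 0)"
    proof -
      have "M r c \<noteq> 0 \<longleftrightarrow> r + c = d + 1" using assms c unfolding antidiag_nonzero_def by blast
      moreover have "c = d + 1 - r \<longleftrightarrow> r + c = d + 1" using assms(2) c by auto
      ultimately show ?thesis by auto
    qed
  qed simp
  also have "\<dots> = M r (d + 1 - r) * x (d + 1 - r)"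
    using assms(2) by (subst sum.delta) auto
  finally show ?thesis using assms(2) unfolding mulv_def by simp
qed

lemma mulv_nz:
  assumes "antidiag_nonzero d M" "r \<in> {1..d}"
  shows "mulv d M x r \<noteq> 0 \<longleftrightarrow> x (d + 1 - r) \<noteq> 0"
proof -
  have "M r (d + 1 - r) \<noteq> 0 \<longleftrightarrow> r + (d + 1 - r) = d + 1"
    using assms unfolding antidiag_nonzero_def by (metis atLeastAtMost_iff diff_le_self le_add_diff_inverse2 add_le_cancel_right le_diff_conv2 Suc_eq_plus1 le_SucI diff_diff_cancel Suc_le_mono order_refl le_add1 add_diff_cancel_left' le_imp_diff_is_add)
  moreover have "r + (d + 1 - r) = d + 1" using assms(2) by auto
  ultimately have "M r (d + 1 - r) \<noteq> 0" by blast
  then show ?thesis using mulv_ad[OF assms] by simp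
qed

lemma mulv_nz':
  assumes "antidiag_nonzero d M" "p \<in> {1..d}"
  shows "mulv d M x (d + 1 - p) \<noteq> 0 \<longleftrightarrow> x p \<noteq> 0"
proof -
  have "d + 1 - p \<in> {1..d}" "d + 1 - (d + 1 - p) = p" using assms(2) by auto
  then show ?thesis using mulv_nz[OF assms(1), of "d + 1 - p" x] by simp
qed

lemma mulv_Rd: "mulv d M x \<in> Rd d"
  unfolding mulv_def Rd_def by auto

lemma zerov_Rd: "zerov \<in> Rd d"
  unfolding zerov_def Rd_def by auto

lemma Rd_zero: "x \<in> Rd d \<Longrightarrow> \<forall>r\<in>{1..d}. x r = 0 \<Longrightarrow> x = zerov"
  unfolding Rd_def zerov_def by (rule ext) auto

lemma mem_af:
  "x \<in> abstr_family d j \<longleftrightarrow>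
     (j = 0 \<and> x = zerov) \<or>
     (1 \<le> j \<and> j \<le> d \<and> x \<in> Rd d \<and> x j \<noteq> 0 \<and> (\<forall>i\<in>{1..d}. i \<noteq> j \<longrightarrow> x i = 0)) \<or>
     (j > d \<and> x \<in> Rd d \<and> (\<exists>p\<in>{1..d}. \<exists>q\<in>{1..d}. p \<noteq> q \<and> x p \<noteq> 0 \<and> x q \<noteq> 0))"
proof (cases "j = 0")
  case True then show ?thesis by (simp add: abstr_family_def)
next
  case j0: False
  show ?thesis
  proof (cases "j \<le> d")
    case True then show ?thesis using j0 by (simp add: abstr_family_def)
  next
    case False
    have "x \<in> abstr_family d j \<longleftrightarrow> x \<in> Rd d \<and> x \<noteq> zerov \<and>
       (\<forall>k\<in>{1..d}. \<not> (x k \<noteq> 0 \<and> (\<forall>i\<in>{1..d}. i \<noteq> k \<longrightarrow> x i = 0)))"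
      using j0 False unfolding abstr_family_def by (auto simp: Suc_le_eq)
    also have "\<dots> \<longleftrightarrow> x \<in> Rd d \<and> (\<exists>p\<in>{1..d}. \<exists>q\<in>{1..d}. p \<noteq> q \<and> x p \<noteq> 0 \<and> x q \<noteq> 0)"
    proof
      assume H: "x \<in> Rd d \<and> x \<noteq> zerov \<and>
       (\<forall>k\<in>{1..d}. \<not> (x k \<noteq> 0 \<and> (\<forall>i\<in>{1..d}. i \<noteq> k \<longrightarrow> x i = 0)))"
      then obtain p where p: "p \<in> {1..d}" "x p \<noteq> 0" using Rd_zero by blast
      then obtain q where "q \<in> {1..d}" "q \<noteq> p" "x q \<noteq> 0" using H by blast
      then show "x \<in> Rd d \<and> (\<exists>p\<in>{1..d}. \<exists>q\<in>{1..d}. p \<noteq> q \<and> x p \<noteq> 0 \<and> x q \<noteq> 0)"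
        using H p by blast
    next
      assume "x \<in> Rd d \<and> (\<exists>p\<in>{1..d}. \<exists>q\<in>{1..d}. p \<noteq> q \<and> x p \<noteq> 0 \<and> x q \<noteq> 0)"
      then show "x \<in> Rd d \<and> x \<noteq> zerov \<and>
       (\<forall>k\<in>{1..d}. \<not> (x k \<noteq> 0 \<and> (\<forall>i\<in>{1..d}. i \<noteq> k \<longrightarrow> x i = 0)))"
        unfolding zerov_def by (metis)
    qed
    finally show ?thesis using j0 False by auto
  qed
qed

lemma disj_lt:
  assumes "j < k" "k \<le> d + 1"
  shows "abstr_family d j \<inter> abstr_family d k = {}"
proof (rule ccontr)
  assume "abstr_family d j \<inter> abstr_family d k \<noteq> {}"
  then obtain x where x: "x \<in> abstr_family d j" "x \<in> abstr_family d k" by blast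
  show False
  proof (cases "j = 0")
    case True
    then have "x = zerov" using x(1) by (simp add: mem_af)
    moreover have "\<exists>r. x r \<noteq> 0"
    proof (cases "k \<le> d")
      case True
      then show ?thesis using x(2) assms by (auto simp: mem_af)
    next
      case False
      then show ?thesis using x(2) unfolding mem_af by blast
    qed
    ultimately show False by (simp add: zerov_def)
  next
    case j0: False
    then have j: "1 \<le> j" "j \<le> d" "x j \<noteq> 0" "\<forall>i\<in>{1..d}. i \<noteq> j \<longrightarrow> x i = 0"
      using x(1) assms unfolding mem_af by auto
    show False
    proof (cases "k \<le> d")
      case True
      then have "\<forall>i\<in>{1..d}. i \<noteq> k \<longrightarrow> x i = 0" using x(2) assms unfolding mem_af by auto
      moreover have "j \<in> {1..d}" "j \<noteq> k" using j assms by auto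
      ultimately show False using j(3) by blast
    next
      case False
      then obtain p q where pq: "p \<in> {1..d}" "q \<in> {1..d}" "p \<noteq> q" "x p \<noteq> 0" "x q \<noteq> 0"
        using x(2) unfolding mem_af by blast
      then show False using j(4) by metis
    qed
  qed
qed

theorem proposition2:
  fixes d :: nat
    and A :: "nat \<Rightarrow> nat \<Rightarrow> nat \<Rightarrow> real"
    and b :: "nat \<Rightarrow> nat \<Rightarrow> real"
  assumes hA: "\<forall>i\<in>{1..d}. antidiag_nonzero d (A i)"
    and hb: "\<forall>i\<in>{1..d}. b i (d - i + 1) \<noteq> 0 \<and> (\<forall>r. r \<noteq> d - i + 1 \<longrightarrow> b i r = 0)"
  shows "state_space_abstraction d (Rd d) {1..d} A b UNIV (abstr_family d) (d + 1)"
  unfolding state_space_abstraction_def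
proof (intro conjI)
  show "abstr_family d 0 = {zerov}" by (simp add: abstr_family_def)
  show "\<forall>j\<le>d + 1. \<forall>k\<le>d + 1. j \<noteq> k \<longrightarrow> abstr_family d j \<inter> abstr_family d k = {}"
  proof (intro allI impI)
    fix j k assume "j \<le> d + 1" "k \<le> d + 1" "j \<noteq> k"
    show "abstr_family d j \<inter> abstr_family d k = {}"
    proof (cases "j < k")
      case True
      then show ?thesis using disj_lt \<open>k \<le> d + 1\<close> by blast
    next
      case False
      then have "k < j" using \<open>j \<noteq> k\<close> by auto
      then show ?thesis using disj_lt \<open>j \<le> d + 1\<close> by blast
    qed
  qed
  show "(\<Union>j\<le>d + 1. abstr_family d j) = Rd d"
  proof
    show "(\<Union>j\<le>d + 1. abstr_family d j) \<subseteq> Rd d"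
      by (auto simp: mem_af zerov_Rd)
    show "Rd d \<subseteq> (\<Union>j\<le>d + 1. abstr_family d j)"
    proof
      fix x assume x: "x \<in> Rd d"
      show "x \<in> (\<Union>j\<le>d + 1. abstr_family d j)"
      proof (cases "\<exists>p\<in>{1..d}. \<exists>q\<in>{1..d}. p \<noteq> q \<and> x p \<noteq> 0 \<and> x q \<noteq> 0")
        case True
        then have "x \<in> abstr_family d (d+1)" using x by (simp add: mem_af)
        then show ?thesis by blast
      next
        case F: False
        show ?thesis
        proof (cases "\<exists>p\<in>{1..d}. x p \<noteq> 0")
          case True
          then obtain p where p: "p \<in> {1..d}" "x p \<noteq> 0" by blast
          have "\<forall>i\<in>{1..d}. i \<noteq> p \<longrightarrow> x i = 0" using F p by blast
          then have "x \<in> abstr_family d p" using x p by (auto simp: mem_af)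
          then show ?thesis using p by auto
        next
          case False
          then have "x = zerov" using Rd_zero x by blast
          then have "x \<in> abstr_family d 0" by (simp add: mem_af)
          then show ?thesis by blast
        qed
      qed
    qed
  qed
  show "\<forall>j\<in>{1..d + 1}. \<forall>i\<in>{1..d}. \<exists>k\<le>d + 1. \<forall>x\<in>abstr_family d j. mulv d (A i) x \<in> abstr_family d k"
  proof (intro ballI)
    fix j i assume j: "j \<in> {1..d + 1}" and i: "i \<in> {1..d}"
    have M: "antidiag_nonzero d (A i)" using hA i by blast
    show "\<exists>k\<le>d + 1. \<forall>x\<in>abstr_family d j. mulv d (A i) x \<in> abstr_family d k"
    proof (cases "j \<le> d")
      case True
      show ?thesis
      proof (intro exI[of _ "d + 1 - j"] conjI ballI)
        fix x assume "x \<in> abstr_family d j"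
        then have x: "x j \<noteq> 0" "\<forall>i\<in>{1..d}. i \<noteq> j \<longrightarrow> x i = 0" using True j by (auto simp: mem_af)
        have "\<forall>r\<in>{1..d}. r \<noteq> d + 1 - j \<longrightarrow> mulv d (A i) x r = 0"
        proof (intro ballI impI)
          fix r assume r: "r \<in> {1..d}" "r \<noteq> d + 1 - j"
          then have "d + 1 - r \<in> {1..d}" "d + 1 - r \<noteq> j" using True j by auto
          then have "x (d + 1 - r) = 0" using x(2) by blast
          then show "mulv d (A i) x r = 0" using mulv_nz[OF M r(1)] by blast
        qed
        moreover have "mulv d (A i) x (d + 1 - j) \<noteq> 0"
          using mulv_nz'[OF M, of j x] x(1) True j by simp
        moreover have "1 \<le> d + 1 - j" "d + 1 - j \<le> d" "d + 1 - j \<noteq> 0" using True j by auto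
        ultimately show "mulv d (A i) x \<in> abstr_family d (d + 1 - j)"
          using mulv_Rd[of d "A i" x] unfolding mem_af by blast
      qed simp
    next
      case False
      then have jd: "j = d + 1" using j by auto
      show ?thesis
      proof (intro exI[of _ "d + 1"] conjI ballI)
        fix x assume "x \<in> abstr_family d j"
        then obtain p q where pq: "p \<in> {1..d}" "q \<in> {1..d}" "p \<noteq> q" "x p \<noteq> 0" "x q \<noteq> 0"
          using jd by (auto simp: mem_af)
        have "mulv d (A i) x (d + 1 - p) \<noteq> 0" "mulv d (A i) x (d + 1 - q) \<noteq> 0"
          using mulv_nz'[OF M pq(1), of x] mulv_nz'[OF M pq(2), of x] pq(4,5) by blast+
        moreover have "d + 1 - p \<noteq> d + 1 - q" "d + 1 - p \<in> {1..d}" "d + 1 - q \<in> {1..d}" using pq by auto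
        ultimately show "mulv d (A i) x \<in> abstr_family d (d + 1)"
          using mulv_Rd[of d "A i" x] unfolding mem_af by (metis less_add_one)
      qed simp
    qed
  qed
  show "\<forall>j\<in>{1..d + 1}. \<forall>i\<in>{1..d}. \<exists>l\<le>d + 1. \<forall>x\<in>abstr_family d j. \<exists>u\<in>UNIV - {0}.
         (\<lambda>r. mulv d (A i) x r + b i r * u) \<in> abstr_family d l"
  proof (intro ballI)
    fix j i assume j: "j \<in> {1..d + 1}" and i: "i \<in> {1..d}"
    have M: "antidiag_nonzero d (A i)" using hA i by blast
    define k where "k = d + 1 - i"
    have k: "k \<in> {1..d}" "d - i + 1 = k" using i by (auto simp: k_def)
    have bk: "b i k \<noteq> 0" "\<And>r. r \<noteq> k \<Longrightarrow> b i r = 0" using hb i k by auto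
    define U where "U = (\<lambda>x. if mulv d (A i) x k \<noteq> 0 then mulv d (A i) x k / b i k else 1)"
    define Z where "Z = (\<lambda>x r. mulv d (A i) x r + b i r * U x)"
    have U0: "U x \<noteq> 0" for x using bk unfolding U_def by auto
    have Zk: "Z x k \<noteq> 0" for x
      using bk unfolding Z_def U_def by auto
    have Zr: "r \<noteq> k \<Longrightarrow> Z x r = mulv d (A i) x r" for x r using bk unfolding Z_def by auto
    have ZR: "Z x \<in> Rd d" for x
      using mulv_Rd[of d "A i" x] k bk unfolding Z_def Rd_def by auto
    have suff: "\<exists>l\<le>d + 1. \<forall>x\<in>abstr_family d j. Z x \<in> abstr_family d l"
    proof (cases "j \<le> d")
      case True
      have jx: "x j \<noteq> 0" "\<forall>i\<in>{1..d}. i \<noteq> j \<longrightarrow> x i = 0" if "x \<in> abstr_family d j" for x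
        using that True j by (auto simp: mem_af)
      show ?thesis
      proof (cases "i = j")
        case True
        show ?thesis
        proof (intro exI[of _ k] conjI ballI)
          fix x assume "x \<in> abstr_family d j"
          note jx = jx[OF this]
          have "\<forall>r\<in>{1..d}. r \<noteq> k \<longrightarrow> Z x r = 0"
          proof (intro ballI impI)
            fix r assume r: "r \<in> {1..d}" "r \<noteq> k"
            then have "d + 1 - r \<in> {1..d}" "d + 1 - r \<noteq> j" using True i k_def by auto
            then have "x (d + 1 - r) = 0" using jx(2) by blast
            then have "mulv d (A i) x r = 0" using mulv_nz[OF M r(1)] by blast
            then show "Z x r = 0" using Zr r(2) by simp
          qed
          then show "Z x \<in> abstr_family d k" using Zk ZR k by (auto simp: mem_af)
        qed (use k in auto)
      next
        case False
        show ?thesis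
        proof (intro exI[of _ "d + 1"] conjI ballI)
          fix x assume "x \<in> abstr_family d j"
          note jx = jx[OF this]
          have ne: "d + 1 - j \<noteq> k" "d + 1 - j \<in> {1..d}" using False j True i k_def by auto
          have "mulv d (A i) x (d + 1 - j) \<noteq> 0"
            using mulv_nz'[OF M, of j x] jx(1) True j by simp
          then have "Z x (d + 1 - j) \<noteq> 0" using Zr ne by auto
          then show "Z x \<in> abstr_family d (d + 1)" using Zk[of x] ZR[of x] k ne unfolding mem_af by (metis less_add_one)
        qed simp
      qed
    next
      case False
      then have jd: "j = d + 1" using j by auto
      show ?thesis
      proof (intro exI[of _ "d + 1"] conjI ballI)
        fix x assume "x \<in> abstr_family d j"
        then obtain p q where pq: "p \<in> {1..d}" "q \<in> {1..d}" "p \<noteq> q" "x p \<noteq> 0" "x q \<noteq> 0"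
          using jd by (auto simp: mem_af)
        have nz: "mulv d (A i) x (d + 1 - p) \<noteq> 0" "mulv d (A i) x (d + 1 - q) \<noteq> 0"
          using mulv_nz'[OF M pq(1), of x] mulv_nz'[OF M pq(2), of x] pq(4,5) by blast+
        have ne: "d + 1 - p \<noteq> d + 1 - q" "d + 1 - p \<in> {1..d}" "d + 1 - q \<in> {1..d}" using pq by auto
        obtain s where s: "s \<in> {1..d}" "s \<noteq> k" "Z x s \<noteq> 0"
        proof (cases "d + 1 - p = k")
          case True
          then show ?thesis using that[of "d + 1 - q"] ne nz Zr by auto
        next
          case False
          then show ?thesis using that[of "d + 1 - p"] ne nz Zr by auto
        qed
        show "Z x \<in> abstr_family d (d + 1)" using s Zk[of x] ZR[of x] k unfolding mem_af by (metis less_add_one)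
      qed simp
    qed
    then obtain l where "l \<le> d + 1" "\<forall>x\<in>abstr_family d j. Z x \<in> abstr_family d l" by blast
    then show "\<exists>l\<le>d + 1. \<forall>x\<in>abstr_family d j. \<exists>u\<in>UNIV - {0}.
         (\<lambda>r. mulv d (A i) x r + b i r * u) \<in> abstr_family d l"
      using U0 unfolding Z_def by blast
  qed
qed

end
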